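(* Let $G_1,G_2$ be cubic graphs, let $c_1\sim c_2$ be proper $3$-edge colorings of $G_1$ and $d_1\sim d_2$ proper $3$-edge colorings of $G_2$. Then $(c_1\,Y\,d_1)\sim(c_2\,Y\,d_2)$ in $G_1\,Y\,G_2$ and $(c_1\,H\,d_1)\sim(c_2\,H\,d_2)$ in $G_1\,H\,G_2$.
   Context: Graphs are finite; multiple edges allowed, loops not. Proper $3$-edge colorings use colors $\{1,2,3\}$, adjacent edges receiving different colors. For colors $a\neq b$, an edge-Kempe chain is a connected component of the subgraph of edges colored $a$ or $b$; an edge-Kempe switch swaps $a,b$ on one chain; $\sim$ denotes equivalence under finite sequences of such switches. Composition Y: choose $v_1\in G_1$ with incident edges $x_j=v_1s_{1j}$ and $v_2\in G_2$ with incident edges $y_j=v_2s_{2j}$ ($j=1,2,3$); $G_1\,Y\,G_2$ deletes $v_1,v_2$ and adds edges $s_{1j}s_{2j}$. Composition H: choose edges $x=s_{11}s_{12}\in G_1$, $y=s_{21}s_{22}\in G_2$; $G_1\,H\,G_2$ deletes $x,y$ and adds $s_{11}s_{21},s_{12}s_{22}$. For proper $3$-edge colorings $c$ of $G_1$, $d$ of $G_2$: let $\hat d$ be obtained from $d$ by a global color permutation with $\hat d(y_j)=c(x_j)$; $c\,Y\,d$ colors $G_1-v_1$ by $c$, $G_2-v_2$ by $\hat d$, and $s_{1j}s_{2j}$ by $c(x_j)$. Let $\tilde d$ be obtained from $d$ by a global color permutation with $\tilde d(y)=c(x)$; $c\,H\,d$ colors $G_1-x$ by $c$, $G_2-y$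 by $\tilde d$, and both new edges by $c(x)$. *)

theory Defs
  imports "HOL-Combinatorics.Permutations"
begin

text \<open>Finite multigraphs without loops: edges are abstract identifiers (so parallel
edges are allowed), each edge has a 2-element set of end vertices.\<close>

record ('v, 'e) mgraph =
  verts :: "'v set"
  edges :: "'e set"
  ends  :: "'e \<Rightarrow> 'v set"

definition wf_graph :: "('v, 'e) mgraph \<Rightarrow> bool" where
  "wf_graph G \<longleftrightarrow> finite (verts G) \<and> finite (edges G) \<and>
     (\<forall>e \<in> edges G. card (ends G e) = 2 \<and> ends G e \<subseteq> verts G)"

definition incident :: "('v, 'e) mgraph \<Rightarrow> 'v \<Rightarrow> 'e set" where
  "incident G v = {e \<in> edges G. v \<in> ends G e}"

definition cubic :: "('v, 'e) mgraph \<Rightarrow> bool" where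
  "cubic G \<longleftrightarrow> wf_graph G \<and> (\<forall>v \<in> verts G. card (incident G v) = 3)"

definition proper_3col :: "('v, 'e) mgraph \<Rightarrow> ('e \<Rightarrow> nat) \<Rightarrow> bool" where
  "proper_3col G c \<longleftrightarrow>
     (\<forall>e \<in> edges G. c e \<in> {1,2,3}) \<and> (\<forall>e. e \<notin> edges G \<longrightarrow> c e = 0) \<and>
     (\<forall>e \<in> edges G. \<forall>f \<in> edges G. e \<noteq> f \<and> ends G e \<inter> ends G f \<noteq> {} \<longrightarrow> c e \<noteq> c f)"

definition ab_adj :: "('v, 'e) mgraph \<Rightarrow> ('e \<Rightarrow> nat) \<Rightarrow> nat \<Rightarrow> nat \<Rightarrow> 'e \<Rightarrow> 'e \<Rightarrow> bool" where
  "ab_adj G c a b e f \<longleftrightarrow> e \<in> edges G \<and> f \<in> edges G \<and> c e \<in> {a, b} \<and> c f \<in> {a, b} \<and>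
     ends G e \<inter> ends G f \<noteq> {}"

definition kempe_chain :: "('v, 'e) mgraph \<Rightarrow> ('e \<Rightarrow> nat) \<Rightarrow> nat \<Rightarrow> nat \<Rightarrow> 'e \<Rightarrow> 'e set" where
  "kempe_chain G c a b e = {f. (ab_adj G c a b)\<^sup>*\<^sup>* e f}"

definition swap_col :: "nat \<Rightarrow> nat \<Rightarrow> nat \<Rightarrow> nat" where
  "swap_col a b k = (if k = a then b else if k = b then a else k)"

definition kempe_step :: "('v, 'e) mgraph \<Rightarrow> ('e \<Rightarrow> nat) \<Rightarrow> ('e \<Rightarrow> nat) \<Rightarrow> bool" where
  "kempe_step G c c' \<longleftrightarrow> (\<exists>a b e. a \<in> {1,2,3} \<and> b \<in> {1,2,3} \<and> a \<noteq> b \<and>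
      e \<in> edges G \<and> c e \<in> {a, b} \<and>
      c' = (\<lambda>f. if f \<in> kempe_chain G c a b e then swap_col a b (c f) else c f))"

definition kempe_equiv :: "('v, 'e) mgraph \<Rightarrow> ('e \<Rightarrow> nat) \<Rightarrow> ('e \<Rightarrow> nat) \<Rightarrow> bool" where
  "kempe_equiv G c c' \<longleftrightarrow> (kempe_step G)\<^sup>*\<^sup>* c c'"

definition other_end :: "('v, 'e) mgraph \<Rightarrow> 'e \<Rightarrow> 'v \<Rightarrow> 'v" where
  "other_end G e v = (THE u. u \<in> ends G e \<and> u \<noteq> v)"

definition Y_data :: "('v, 'e) mgraph \<Rightarrow> 'v \<Rightarrow> (nat \<Rightarrow> 'e) \<Rightarrow> bool" where
  "Y_data G v x \<longleftrightarrow> v \<in> verts G \<and> inj_on x {1,2,3} \<and> incident G v = x ` {1,2,3}"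

text \<open>Vertices of G1 Y G2: Inl/Inr copies of the surviving vertices. Edges: the edges of G1
(with Inl (x j) now being the new edge s1j s2j) and the edges of G2 other than the y j.\<close>

definition graphY :: "('v1, 'e1) mgraph \<Rightarrow> 'v1 \<Rightarrow> (nat \<Rightarrow> 'e1) \<Rightarrow>
    ('v2, 'e2) mgraph \<Rightarrow> 'v2 \<Rightarrow> (nat \<Rightarrow> 'e2) \<Rightarrow> ('v1 + 'v2, 'e1 + 'e2) mgraph" where
  "graphY G1 v1 x G2 v2 y =
    \<lparr> verts = Inl ` (verts G1 - {v1}) \<union> Inr ` (verts G2 - {v2}),
      edges = Inl ` edges G1 \<union> Inr ` (edges G2 - y ` {1,2,3}),
      ends = (\<lambda>e. case e of
                Inl e1 \<Rightarrow> (if e1 \<in> x ` {1,2,3} then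
                             (let j = (THE j. j \<in> {1,2,3} \<and> x j = e1) in
                               {Inl (other_end G1 (x j) v1), Inr (other_end G2 (y j) v2)})
                           else Inl ` ends G1 e1)
              | Inr e2 \<Rightarrow> Inr ` ends G2 e2) \<rparr>"

definition colY :: "('v1, 'e1) mgraph \<Rightarrow> 'v1 \<Rightarrow> (nat \<Rightarrow> 'e1) \<Rightarrow>
    ('v2, 'e2) mgraph \<Rightarrow> 'v2 \<Rightarrow> (nat \<Rightarrow> 'e2) \<Rightarrow>
    ('e1 \<Rightarrow> nat) \<Rightarrow> ('e2 \<Rightarrow> nat) \<Rightarrow> (nat \<Rightarrow> nat) \<Rightarrow> ('e1 + 'e2 \<Rightarrow> nat)" where
  "colY G1 v1 x G2 v2 y c d p =
    (\<lambda>e. if e \<in> edges (graphY G1 v1 x G2 v2 y) then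
           (case e of Inl e1 \<Rightarrow> c e1 | Inr e2 \<Rightarrow> p (d e2))
         else 0)"

definition Y_perm :: "(nat \<Rightarrow> 'e1) \<Rightarrow> (nat \<Rightarrow> 'e2) \<Rightarrow> ('e1 \<Rightarrow> nat) \<Rightarrow> ('e2 \<Rightarrow> nat) \<Rightarrow> (nat \<Rightarrow> nat) \<Rightarrow> bool" where
  "Y_perm x y c d p \<longleftrightarrow> p permutes {1,2,3} \<and> (\<forall>j \<in> {1,2,3}. p (d (y j)) = c (x j))"

definition H_data :: "('v, 'e) mgraph \<Rightarrow> 'e \<Rightarrow> 'v \<Rightarrow> 'v \<Rightarrow> bool" where
  "H_data G x s1 s2 \<longleftrightarrow> x \<in> edges G \<and> ends G x = {s1, s2}"

definition graphH :: "('v1, 'e1) mgraph \<Rightarrow> 'e1 \<Rightarrow> 'v1 \<Rightarrow> 'v1 \<Rightarrow>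
    ('v2, 'e2) mgraph \<Rightarrow> 'e2 \<Rightarrow> 'v2 \<Rightarrow> 'v2 \<Rightarrow> ('v1 + 'v2, 'e1 + 'e2) mgraph" where
  "graphH G1 x s11 s12 G2 y s21 s22 =
    \<lparr> verts = Inl ` verts G1 \<union> Inr ` verts G2,
      edges = Inl ` edges G1 \<union> Inr ` edges G2,
      ends = (\<lambda>e. case e of
                Inl e1 \<Rightarrow> (if e1 = x then {Inl s11, Inr s21} else Inl ` ends G1 e1)
              | Inr e2 \<Rightarrow> (if e2 = y then {Inl s12, Inr s22} else Inr ` ends G2 e2)) \<rparr>"

definition colH :: "('v1, 'e1) mgraph \<Rightarrow> 'e1 \<Rightarrow> 'v1 \<Rightarrow> 'v1 \<Rightarrow>
    ('v2, 'e2) mgraph \<Rightarrow> 'e2 \<Rightarrow> 'v2 \<Rightarrow> 'v2 \<Rightarrow>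
    ('e1 \<Rightarrow> nat) \<Rightarrow> ('e2 \<Rightarrow> nat) \<Rightarrow> (nat \<Rightarrow> nat) \<Rightarrow> ('e1 + 'e2 \<Rightarrow> nat)" where
  "colH G1 x s11 s12 G2 y s21 s22 c d p =
    (\<lambda>e. if e \<in> edges (graphH G1 x s11 s12 G2 y s21 s22) then
           (case e of Inl e1 \<Rightarrow> c e1 | Inr e2 \<Rightarrow> p (d e2))
         else 0)"

definition H_perm :: "'e1 \<Rightarrow> 'e2 \<Rightarrow> ('e1 \<Rightarrow> nat) \<Rightarrow> ('e2 \<Rightarrow> nat) \<Rightarrow> (nat \<Rightarrow> nat) \<Rightarrow> bool" where
  "H_perm x y c d p \<longleftrightarrow> p permutes {1,2,3} \<and> p (d y) = c x"

end

theory Submission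
  imports Defs
begin


lemma swap_col_in: "swap_col a b k \<in> {a,b} \<longleftrightarrow> k \<in> {a,b}"
  by (auto simp: swap_col_def)

lemma swap_col_invol[simp]: "swap_col a b (swap_col a b k) = k"
  by (auto simp: swap_col_def)

lemma swap_col_perm: "inj p \<Longrightarrow> p (swap_col a b k) = swap_col (p a) (p b) (p k)"
  by (auto simp: swap_col_def dest: injD)

lemma swap_col_permutes: "a \<in> S \<Longrightarrow> b \<in> S \<Longrightarrow> swap_col a b permutes S"
proof -
  assume "a \<in> S" "b \<in> S"
  moreover have "swap_col a b = transpose a b" by (auto simp: swap_col_def transpose_def)
  ultimately show ?thesis by (simp add: permutes_swap_id)
qed

lemma ab_adj_sym: "ab_adj G c a b e f = ab_adj G c a b f e"
  by (auto simp: ab_adj_def)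

lemma chain_refl: "e \<in> kempe_chain G c a b e"
  by (simp add: kempe_chain_def)

lemma chain_step: "f \<in> kempe_chain G c a b e \<Longrightarrow> ab_adj G c a b f g \<Longrightarrow> g \<in> kempe_chain G c a b e"
  by (simp add: kempe_chain_def)

lemma chain_edges: assumes "e \<in> edges G" "f \<in> kempe_chain G c a b e" shows "f \<in> edges G"
proof -
  from assms(2) have "(ab_adj G c a b)\<^sup>*\<^sup>* e f" by (simp add: kempe_chain_def)
  then show ?thesis by (induction rule: rtranclp_induct) (auto simp: ab_adj_def assms(1))
qed

lemma chain_col: assumes "c e \<in> {a,b}" "f \<in> kempe_chain G c a b e" shows "c f \<in> {a,b}"
proof -
  from assms(2) have "(ab_adj G c a b)\<^sup>*\<^sup>* e f" by (simp add: kempe_chain_def)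
  then show ?thesis by (induction rule: rtranclp_induct) (use assms(1) in \<open>auto simp: ab_adj_def\<close>)
qed

lemma chain_adj: "e \<in> edges G \<Longrightarrow> c e \<in> {a,b} \<Longrightarrow> f \<in> kempe_chain G c a b e \<Longrightarrow>
   f' \<in> edges G \<Longrightarrow> c f' \<in> {a,b} \<Longrightarrow> u \<in> ends G f \<Longrightarrow> u \<in> ends G f' \<Longrightarrow>
   f' \<in> kempe_chain G c a b e"
proof -
  assume a: "e \<in> edges G" "c e \<in> {a,b}" "f \<in> kempe_chain G c a b e"
   "f' \<in> edges G" "c f' \<in> {a,b}" "u \<in> ends G f" "u \<in> ends G f'"
  have "f \<in> edges G" using chain_edges a(1,3) .
  moreover have "c f \<in> {a,b}" using chain_col a(2,3) .
  ultimately have "ab_adj G c a b f f'" using a unfolding ab_adj_def by blast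
  then show ?thesis using chain_step a(3) by metis
qed

lemma chain_sub: "e \<in> T \<Longrightarrow> (\<forall>f g. f \<in> T \<longrightarrow> ab_adj G c a b f g \<longrightarrow> g \<in> T) \<Longrightarrow>
   kempe_chain G c a b e \<subseteq> T"
proof
  fix f assume "e \<in> T" "\<forall>f g. f \<in> T \<longrightarrow> ab_adj G c a b f g \<longrightarrow> g \<in> T" "f \<in> kempe_chain G c a b e"
  then have "(ab_adj G c a b)\<^sup>*\<^sup>* e f" "e \<in> T" "\<forall>f g. f \<in> T \<longrightarrow> ab_adj G c a b f g \<longrightarrow> g \<in> T" by (auto simp: kempe_chain_def)
  then show "f \<in> T"
    by (induction rule: rtranclp_induct) auto
qed

lemma swap_closed:
  assumes "finite (edges G)" "T \<subseteq> edges G" "a \<in> {1,2,3}" "b \<in> {1,2,3}" "a \<noteq> b"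
    "\<forall>f\<in>T. c f \<in> {a,b}" "\<forall>f g. f \<in> T \<longrightarrow> ab_adj G c a b f g \<longrightarrow> g \<in> T"
  shows "kempe_equiv G c (\<lambda>f. if f \<in> T then swap_col a b (c f) else c f)"
  using assms
proof (induction "card T" arbitrary: T c rule: less_induct)
  case less
  show ?case
  proof (cases "T = {}")
    case True then show ?thesis by (simp add: kempe_equiv_def)
  next
    case False
    then obtain e where e: "e \<in> T" by auto
    define K where "K = kempe_chain G c a b e"
    define c' where "c' = (\<lambda>f. if f \<in> K then swap_col a b (c f) else c f)"
    have eE: "e \<in> edges G" using e less.prems by auto
    have ce: "c e \<in> {a,b}" using e less.prems by auto
    have step: "kempe_step G c c'"
      unfolding kempe_step_def
    proof (intro exI conjI)
      show "c' = (\<lambda>f. if f \<in> kempe_chain G c a b e then swap_col a b (c f) else c f)"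
        unfolding c'_def K_def ..
    qed (use less.prems eE ce in auto)
    have KT: "K \<subseteq> T" unfolding K_def using chain_sub[OF e] less.prems by blast
    have cc': "c' f \<in> {a,b} \<longleftrightarrow> c f \<in> {a,b}" for f
      unfolding c'_def using swap_col_in by auto
    have adj_eq: "ab_adj G c' a b = ab_adj G c a b"
      unfolding ab_adj_def using cc' by blast
    have fin: "finite T" using less.prems finite_subset by blast
    have lt: "card (T - K) < card T"
    proof (rule psubset_card_mono[OF fin])
      show "T - K \<subset> T" using e chain_refl[of e G c a b] unfolding K_def by blast
    qed
    have IH: "kempe_equiv G c' (\<lambda>f. if f \<in> T - K then swap_col a b (c' f) else c' f)"
    proof (rule less.hyps[OF lt])
      show "finite (edges G)" "T - K \<subseteq> edges G" "a \<in> {1,2,3}" "b \<in> {1,2,3}" "a \<noteq> b"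
        using less.prems by auto
      show "\<forall>f\<in>T - K. c' f \<in> {a, b}" using less.prems cc' by auto
      show "\<forall>f g. f \<in> T - K \<longrightarrow> ab_adj G c' a b f g \<longrightarrow> g \<in> T - K"
      proof (intro allI impI)
        fix f g assume f: "f \<in> T - K" and adj: "ab_adj G c' a b f g"
        then have adj': "ab_adj G c a b f g" using adj_eq by simp
        then have "g \<in> T" using f less.prems by auto
        moreover have "g \<notin> K"
        proof
          assume "g \<in> K"
          then have "f \<in> K" unfolding K_def using chain_step adj' ab_adj_sym by metis
          then show False using f by auto
        qed
        ultimately show "g \<in> T - K" by auto
      qed
    qed
    have eq: "(\<lambda>f. if f \<in> T - K then swap_col a b (c' f) else c' f)
        = (\<lambda>f. if f \<in> T then swap_col a b (c f) else c f)"
      using KT unfolding c'_def by (intro ext) auto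
    have "(kempe_step G)\<^sup>*\<^sup>* c' (\<lambda>f. if f \<in> T then swap_col a b (c f) else c f)"
      using IH unfolding eq kempe_equiv_def .
    then show ?thesis unfolding kempe_equiv_def by (rule converse_rtranclp_into_rtranclp[of "kempe_step G", OF step])
  qed
qed

lemma swap_closed':
  assumes "finite (edges G)" "T \<subseteq> edges G" "a \<in> {1,2,3}" "b \<in> {1,2,3}" "a \<noteq> b"
    "\<forall>f\<in>T. c f \<in> {a,b}" "\<forall>f g. f \<in> T \<longrightarrow> ab_adj G c a b f g \<longrightarrow> g \<in> T"
    "c'' = (\<lambda>f. if f \<in> T then swap_col a b (c f) else c f)"
  shows "kempe_equiv G c c''"
  unfolding assms(8) by (rule swap_closed[OF assms(1-7)])



lemma other_end_in:
  assumes "wf_graph G" "e \<in> edges G" "v \<in> ends G e"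
  shows "other_end G e v \<in> ends G e \<and> other_end G e v \<noteq> v"
proof -
  have "card (ends G e) = 2" using assms unfolding wf_graph_def by auto
  then obtain u w where uw: "ends G e = {u,w}" "u \<noteq> w" by (auto simp: card_2_iff)
  have "\<exists>!z. z \<in> ends G e \<and> z \<noteq> v" using uw assms(3) by auto
  then show ?thesis unfolding other_end_def by (rule theI')
qed

locale Ysetup =
  fixes G1 :: "('v1,'e1) mgraph" and v1 :: 'v1 and x :: "nat \<Rightarrow> 'e1"
    and G2 :: "('v2,'e2) mgraph" and v2 :: 'v2 and y :: "nat \<Rightarrow> 'e2"
  assumes wf1: "wf_graph G1" and wf2: "wf_graph G2"
    and Yd1: "Y_data G1 v1 x" and Yd2: "Y_data G2 v2 y"
begin

abbreviation "GY \<equiv> graphY G1 v1 x G2 v2 y"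

lemma x_facts: "j \<in> {1,2,3} \<Longrightarrow> x j \<in> edges G1 \<and> v1 \<in> ends G1 (x j)"
  using Yd1 unfolding Y_data_def incident_def by blast

lemma y_facts: "j \<in> {1,2,3} \<Longrightarrow> y j \<in> edges G2 \<and> v2 \<in> ends G2 (y j)"
  using Yd2 unfolding Y_data_def incident_def by blast

lemma the_x: "j \<in> {1,2,3} \<Longrightarrow> (THE j'. j' \<in> {1,2,3} \<and> x j' = x j) = j"
  using Yd1 unfolding Y_data_def by (intro the_equality) (auto dest: inj_onD)

lemma edgesY[simp]: "Inl e \<in> edges GY \<longleftrightarrow> e \<in> edges G1"
  "Inr f \<in> edges GY \<longleftrightarrow> f \<in> edges G2 \<and> f \<notin> y ` {1,2,3}"
  by (auto simp: graphY_def)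

lemma finY: "finite (edges GY)"
  using wf1 wf2 by (simp add: graphY_def wf_graph_def)

lemma ends_x: assumes j: "j \<in> {1,2,3}"
  shows "ends GY (Inl (x j)) = {Inl (other_end G1 (x j) v1), Inr (other_end G2 (y j) v2)}"
proof -
  have m: "x j \<in> x ` {1,2,3}" using j by blast
  show ?thesis unfolding graphY_def mgraph.select_convs sum.case if_P[OF m] Let_def the_x[OF j] ..
qed

lemma ends_Inl_Inl: "Inl u \<in> ends GY (Inl e) \<Longrightarrow> u \<in> ends G1 e"
proof -
  assume a: "Inl u \<in> ends GY (Inl e)"
  show ?thesis
  proof (cases "e \<in> x ` {1,2,3}")
    case True
    then obtain j where j: "j \<in> {1,2,3}" "e = x j" by auto
    then have "u = other_end G1 (x j) v1" using a ends_x[OF j(1)] by simp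
    then show ?thesis using other_end_in[OF wf1] x_facts[OF j(1)] j by auto
  next
    case False then show ?thesis using a by (auto simp: graphY_def)
  qed
qed

lemma ends_Inl_Inr: "Inr u \<in> ends GY (Inl e) \<Longrightarrow> \<exists>j\<in>{1,2,3}. e = x j \<and> u \<in> ends G2 (y j)"
proof -
  assume a: "Inr u \<in> ends GY (Inl e)"
  show ?thesis
  proof (cases "e \<in> x ` {1,2,3}")
    case True
    then obtain j where j: "j \<in> {1,2,3}" "e = x j" by auto
    then have "u = other_end G2 (y j) v2" using a ends_x[OF j(1)] by simp
    then show ?thesis using other_end_in[OF wf2] y_facts[OF j(1)] j by auto
  next
    case False then show ?thesis using a by (auto simp: graphY_def)
  qed
qed

lemma ends_Inr_Inl: "Inl u \<in> ends GY (Inr e) \<Longrightarrow> False"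
  by (auto simp: graphY_def)

lemma ends_Inr_Inr: "Inr u \<in> ends GY (Inr e) \<Longrightarrow> u \<in> ends G2 e"
  by (auto simp: graphY_def)

lemma colY_Inl[simp]: "colY G1 v1 x G2 v2 y c d p (Inl e) = (if e \<in> edges G1 then c e else 0)"
  by (simp add: colY_def)

lemma colY_Inr[simp]: "colY G1 v1 x G2 v2 y c d p (Inr e) =
   (if e \<in> edges G2 \<and> e \<notin> y ` {1,2,3} then p (d e) else 0)"
  by (simp add: colY_def)

end


context Ysetup begin

lemma Y_cstep:
  assumes Yp: "Y_perm x y c d p" and st: "kempe_step G1 c c'"
  shows "\<exists>p'. Y_perm x y c' d p' \<and>
    kempe_equiv GY (colY G1 v1 x G2 v2 y c d p) (colY G1 v1 x G2 v2 y c' d p')"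
proof -
  from st obtain a b e where ab: "a \<in> {1,2,3}" "b \<in> {1,2,3}" "a \<noteq> b" and eE: "e \<in> edges G1"
    and ce: "c e \<in> {a,b}"
    and c'def: "c' = (\<lambda>f. if f \<in> kempe_chain G1 c a b e then swap_col a b (c f) else c f)"
    unfolding kempe_step_def by blast
  define K where "K = kempe_chain G1 c a b e"
  have KE: "f \<in> K \<Longrightarrow> f \<in> edges G1" for f unfolding K_def using chain_edges eE by metis
  have Kc: "f \<in> K \<Longrightarrow> c f \<in> {a,b}" for f unfolding K_def using chain_col ce by metis
  have Kadj: "f \<in> K \<Longrightarrow> f' \<in> edges G1 \<Longrightarrow> c f' \<in> {a,b} \<Longrightarrow> u \<in> ends G1 f \<Longrightarrow> u \<in> ends G1 f'
     \<Longrightarrow> f' \<in> K" for f f' u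
    unfolding K_def using chain_adj[of e G1 c a b, OF eE ce] by metis
  let ?col = "colY G1 v1 x G2 v2 y c d p"
  have pp: "p permutes {1,2,3}" and pc: "\<forall>j\<in>{1,2,3}. p (d (y j)) = c (x j)"
    using Yp unfolding Y_perm_def by auto
  show ?thesis
  proof (cases "\<exists>j\<in>{1,2,3}. x j \<in> K")
    case False
    define T :: "('e1 + 'e2) set" where "T = Inl ` K"
    have "Y_perm x y c' d p"
      using Yp False unfolding Y_perm_def c'def K_def[symmetric] by auto
    moreover have "kempe_equiv GY ?col (colY G1 v1 x G2 v2 y c' d p)"
    proof (rule swap_closed'[OF finY _ ab, where T = T])
      show "T \<subseteq> edges GY" unfolding T_def using KE by auto
      show "\<forall>f\<in>T. ?col f \<in> {a, b}" unfolding T_def using KE Kc by auto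
      show "\<forall>g h. g \<in> T \<longrightarrow> ab_adj GY ?col a b g h \<longrightarrow> h \<in> T"
      proof (intro allI impI)
        fix g h assume g: "g \<in> T" and adj: "ab_adj GY ?col a b g h"
        from adj obtain w where hE: "h \<in> edges GY" and colh: "?col h \<in> {a,b}"
          and w: "w \<in> ends GY g" "w \<in> ends GY h" unfolding ab_adj_def by auto
        from g obtain f where f: "g = Inl f" "f \<in> K" unfolding T_def by auto
        have fnx: "\<And>j. j \<in> {1,2,3} \<Longrightarrow> f \<noteq> x j" using False f by auto
        show "h \<in> T"
        proof (cases h)
          case (Inl f')
          show ?thesis
          proof (cases w)
            case (Inl u)
            then have "u \<in> ends G1 f" "u \<in> ends G1 f'" using w f \<open>h = Inl f'\<close> ends_Inl_Inl by auto
            moreover have "f' \<in> edges G1" "c f' \<in> {a,b}" using hE colh \<open>h = Inl f'\<close> by auto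
            ultimately show ?thesis using Kadj f \<open>h = Inl f'\<close> unfolding T_def by blast
          next
            case (Inr u)
            then show ?thesis using w f fnx ends_Inl_Inr by blast
          qed
        next
          case (Inr f')
          show ?thesis
          proof (cases w)
            case (Inl u)
            then show ?thesis using w \<open>h = Inr f'\<close> ends_Inr_Inl by blast
          next
            case (Inr u)
            then show ?thesis using w f fnx ends_Inl_Inr by blast
          qed
        qed
      qed
      show "colY G1 v1 x G2 v2 y c' d p = (\<lambda>f. if f \<in> T then swap_col a b (?col f) else ?col f)"
      proof
        fix g show "colY G1 v1 x G2 v2 y c' d p g = (if g \<in> T then swap_col a b (?col g) else ?col g)"
          unfolding T_def c'def K_def[symmetric] using KE by (cases g) auto
      qed
    qed
    ultimately show ?thesis by blast
  next
    case True
    then obtain j0 where j0: "j0 \<in> {1,2,3}" "x j0 \<in> K" by auto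
    have xK: "j \<in> {1,2,3} \<Longrightarrow> c (x j) \<in> {a,b} \<Longrightarrow> x j \<in> K" for j
      using Kadj[OF j0(2)] x_facts[OF j0(1)] x_facts[of j] by blast
    define N where "N = {f. f \<in> edges G2 \<and> f \<notin> y ` {1,2,3} \<and> p (d f) \<in> {a,b}}"
    define T where "T = Inl ` K \<union> Inr ` N"
    have "Y_perm x y c' d (swap_col a b \<circ> p)"
      unfolding Y_perm_def
    proof
      show "swap_col a b \<circ> p permutes {1,2,3}"
        using pp swap_col_permutes[OF ab(1,2)] by (simp add: permutes_compose)
      show "\<forall>j\<in>{1::nat,2,3}. (swap_col a b \<circ> p) (d (y j)) = c' (x j)"
      proof
        fix j :: nat assume j: "j \<in> {1,2,3}"
        show "(swap_col a b \<circ> p) (d (y j)) = c' (x j)"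
        proof (cases "x j \<in> K")
          case True then show ?thesis using pc j unfolding c'def K_def[symmetric] by auto
        next
          case False
          then have "c (x j) \<notin> {a,b}" using xK j by blast
          then show ?thesis using False pc j unfolding c'def K_def[symmetric]
            by (auto simp: swap_col_def)
        qed
      qed
    qed
    moreover have "kempe_equiv GY ?col (colY G1 v1 x G2 v2 y c' d (swap_col a b \<circ> p))"
    proof (rule swap_closed'[OF finY _ ab, where T = T])
      show "T \<subseteq> edges GY" unfolding T_def N_def using KE by auto
      show "\<forall>f\<in>T. ?col f \<in> {a, b}" unfolding T_def N_def using KE Kc by fastforce
      show "\<forall>g h. g \<in> T \<longrightarrow> ab_adj GY ?col a b g h \<longrightarrow> h \<in> T"
      proof (intro allI impI)
        fix g h assume g: "g \<in> T" and adj: "ab_adj GY ?col a b g h"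
        from adj obtain w where hE: "h \<in> edges GY" and colh: "?col h \<in> {a,b}"
          and w: "w \<in> ends GY g" "w \<in> ends GY h" unfolding ab_adj_def by auto
        show "h \<in> T"
        proof (cases h)
          case (Inr f')
          then show ?thesis using hE colh unfolding T_def N_def by auto
        next
          case (Inl f')
          have f'E: "f' \<in> edges G1" "c f' \<in> {a,b}" using hE colh Inl by auto
          show ?thesis
          proof (cases g)
            case (Inl f)
            then have fK: "f \<in> K" using g unfolding T_def by auto
            show ?thesis
            proof (cases w)
              case (Inl u)
              then have "u \<in> ends G1 f" "u \<in> ends G1 f'" using w \<open>g = Inl f\<close> \<open>h = Inl f'\<close> ends_Inl_Inl by auto
              then show ?thesis using Kadj fK f'E \<open>h = Inl f'\<close> unfolding T_def by blast
            next
              case (Inr u)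
              then obtain j where "j \<in> {1,2,3}" "f' = x j" using w \<open>h = Inl f'\<close> ends_Inl_Inr by blast
              then show ?thesis using xK f'E \<open>h = Inl f'\<close> unfolding T_def by blast
            qed
          next
            case (Inr f)
            show ?thesis
            proof (cases w)
              case (Inl u)
              then show ?thesis using w \<open>g = Inr f\<close> ends_Inr_Inl by blast
            next
              case (Inr u)
              then obtain j where "j \<in> {1,2,3}" "f' = x j" using w \<open>h = Inl f'\<close> ends_Inl_Inr by blast
              then show ?thesis using xK f'E \<open>h = Inl f'\<close> unfolding T_def by blast
            qed
          qed
        qed
      qed
      show "colY G1 v1 x G2 v2 y c' d (swap_col a b \<circ> p) = (\<lambda>f. if f \<in> T then swap_col a b (?col f) else ?col f)"
      proof
        fix g show "colY G1 v1 x G2 v2 y c' d (swap_col a b \<circ> p) g = (if g \<in> T then swap_col a b (?col g) else ?col g)"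
          unfolding T_def N_def c'def K_def[symmetric] using KE by (cases g) (auto simp: swap_col_def)
      qed
    qed
    ultimately show ?thesis by blast
  qed
qed

end


lemma swap_col_fix: "k \<notin> {a,b} \<Longrightarrow> swap_col a b k = k"
  by (simp add: swap_col_def)

context Ysetup begin

lemma Y_dstep:
  assumes Yp: "Y_perm x y c d p" and st: "kempe_step G2 d d'"
  shows "\<exists>p'. Y_perm x y c d' p' \<and>
    kempe_equiv GY (colY G1 v1 x G2 v2 y c d p) (colY G1 v1 x G2 v2 y c d' p')"
proof -
  from st obtain a b e where ab: "a \<in> {1,2,3}" "b \<in> {1,2,3}" "a \<noteq> b" and eE: "e \<in> edges G2"
    and de: "d e \<in> {a,b}"
    and d'def: "d' = (\<lambda>f. if f \<in> kempe_chain G2 d a b e then swap_col a b (d f) else d f)"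
    unfolding kempe_step_def by blast
  define L where "L = kempe_chain G2 d a b e"
  have LE: "f \<in> L \<Longrightarrow> f \<in> edges G2" for f unfolding L_def using chain_edges eE by metis
  have Lc: "f \<in> L \<Longrightarrow> d f \<in> {a,b}" for f unfolding L_def using chain_col de by metis
  have Ladj: "f \<in> L \<Longrightarrow> f' \<in> edges G2 \<Longrightarrow> d f' \<in> {a,b} \<Longrightarrow> u \<in> ends G2 f \<Longrightarrow> u \<in> ends G2 f'
     \<Longrightarrow> f' \<in> L" for f f' u
    unfolding L_def using chain_adj[of e G2 d a b, OF eE de] by metis
  let ?col = "colY G1 v1 x G2 v2 y c d p"
  have pp: "p permutes {1,2,3}" and pc: "\<forall>j\<in>{1,2,3}. p (d (y j)) = c (x j)"
    using Yp unfolding Y_perm_def by auto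
  have injp: "inj p" using pp permutes_inj by blast
  define a' where "a' = p a"
  define b' where "b' = p b"
  have ab': "a' \<in> {1,2,3}" "b' \<in> {1,2,3}" "a' \<noteq> b'"
  proof -
    show "a' \<in> {1,2,3}" using ab(1) pp unfolding a'_def by (simp only: permutes_in_image)
    show "b' \<in> {1,2,3}" using ab(2) pp unfolding b'_def by (simp only: permutes_in_image)
    show "a' \<noteq> b'" using ab(3) unfolding a'_def b'_def by (simp add: inj_eq[OF injp])
  qed
  have pin: "p k \<in> {a',b'} \<longleftrightarrow> k \<in> {a,b}" for k
    unfolding a'_def b'_def by (simp add: inj_eq[OF injp])
  have psw: "p (swap_col a b k) = swap_col a' b' (p k)" for k
    unfolding a'_def b'_def using swap_col_perm[OF injp] .
  have d'L: "d' f = (if f \<in> L then swap_col a b (d f) else d f)" for f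
    unfolding d'def L_def ..
  show ?thesis
  proof (cases "\<exists>j\<in>{1,2,3}. y j \<in> L")
    case False
    define T :: "('e1 + 'e2) set" where "T = Inr ` L"
    have "Y_perm x y c d' p"
      using Yp False unfolding Y_perm_def d'L by auto
    moreover have "kempe_equiv GY ?col (colY G1 v1 x G2 v2 y c d' p)"
    proof (rule swap_closed'[OF finY _ ab', where T = T])
      show "T \<subseteq> edges GY" unfolding T_def using LE False by auto
      show "\<forall>f\<in>T. ?col f \<in> {a', b'}" unfolding T_def using LE Lc False pin by auto
      show "\<forall>g h. g \<in> T \<longrightarrow> ab_adj GY ?col a' b' g h \<longrightarrow> h \<in> T"
      proof (intro allI impI)
        fix g h assume g: "g \<in> T" and adj: "ab_adj GY ?col a' b' g h"
        from adj obtain w where hE: "h \<in> edges GY" and colh: "?col h \<in> {a',b'}"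
          and w: "w \<in> ends GY g" "w \<in> ends GY h" unfolding ab_adj_def by auto
        from g obtain f where f: "g = Inr f" "f \<in> L" unfolding T_def by auto
        show "h \<in> T"
        proof (cases w)
          case (Inl u)
          then show ?thesis using w f ends_Inr_Inl by blast
        next
          case (Inr u)
          then have uf: "u \<in> ends G2 f" using w f ends_Inr_Inr by blast
          show ?thesis
          proof (cases h)
            case (Inr f')
            then have "u \<in> ends G2 f'" using w Inr \<open>w = Inr u\<close> ends_Inr_Inr by blast
            moreover have "f' \<in> edges G2" "d f' \<in> {a,b}" using hE colh \<open>h = Inr f'\<close> pin by auto
            ultimately show ?thesis using Ladj f uf \<open>h = Inr f'\<close> unfolding T_def by blast
          next
            case (Inl f')
            then obtain j where j: "j \<in> {1,2,3}" "f' = x j" "u \<in> ends G2 (y j)"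
              using w \<open>w = Inr u\<close> ends_Inl_Inr by blast
            have "c (x j) \<in> {a',b'}" using colh Inl j x_facts[of j] by auto
            then have "d (y j) \<in> {a,b}" using pc j pin by metis
            then have "y j \<in> L" using Ladj[OF f(2) _ _ uf j(3)] y_facts[OF j(1)] by blast
            then show ?thesis using False j by blast
          qed
        qed
      qed
      show "colY G1 v1 x G2 v2 y c d' p = (\<lambda>f. if f \<in> T then swap_col a' b' (?col f) else ?col f)"
      proof
        fix g show "colY G1 v1 x G2 v2 y c d' p g = (if g \<in> T then swap_col a' b' (?col g) else ?col g)"
          unfolding T_def using LE False by (cases g) (auto simp: d'L psw)
      qed
    qed
    ultimately show ?thesis by blast
  next
    case True
    then obtain j0 where j0: "j0 \<in> {1,2,3}" "y j0 \<in> L" by auto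
    have yL: "j \<in> {1,2,3} \<Longrightarrow> d (y j) \<in> {a,b} \<Longrightarrow> y j \<in> L" for j
      using Ladj[OF j0(2)] y_facts[OF j0(1)] y_facts[of j] by blast
    define N where "N = {f. f \<in> edges G2 \<and> f \<notin> y ` {1,2,3} \<and> d f \<in> {a,b} \<and> f \<notin> L}"
    define T :: "('e1 + 'e2) set" where "T = Inr ` N"
    have "Y_perm x y c d' (swap_col a' b' \<circ> p)"
      unfolding Y_perm_def
    proof
      show "swap_col a' b' \<circ> p permutes {1,2,3}"
        using pp swap_col_permutes[OF ab'(1,2)] by (simp add: permutes_compose)
      show "\<forall>j\<in>{1::nat,2,3}. (swap_col a' b' \<circ> p) (d' (y j)) = c (x j)"
      proof
        fix j :: nat assume j: "j \<in> {1,2,3}"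
        show "(swap_col a' b' \<circ> p) (d' (y j)) = c (x j)"
        proof (cases "y j \<in> L")
          case True
          have "p (d (y j)) = c (x j)" using pc j by blast
          then show ?thesis using True by (simp add: d'L psw)
        next
          case False
          then have "d (y j) \<notin> {a,b}" using yL j by blast
          then have "p (d (y j)) \<notin> {a',b'}" using pin by blast
          moreover have "p (d (y j)) = c (x j)" using pc j by blast
          ultimately show ?thesis using False by (simp add: d'L swap_col_fix)
        qed
      qed
    qed
    moreover have "kempe_equiv GY ?col (colY G1 v1 x G2 v2 y c d' (swap_col a' b' \<circ> p))"
    proof (rule swap_closed'[OF finY _ ab', where T = T])
      show "T \<subseteq> edges GY" unfolding T_def N_def by auto
      show "\<forall>f\<in>T. ?col f \<in> {a', b'}" unfolding T_def N_def using pin by auto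
      show "\<forall>g h. g \<in> T \<longrightarrow> ab_adj GY ?col a' b' g h \<longrightarrow> h \<in> T"
      proof (intro allI impI)
        fix g h assume g: "g \<in> T" and adj: "ab_adj GY ?col a' b' g h"
        from adj obtain w where hE: "h \<in> edges GY" and colh: "?col h \<in> {a',b'}"
          and w: "w \<in> ends GY g" "w \<in> ends GY h" unfolding ab_adj_def by auto
        from g obtain f where f: "g = Inr f" "f \<in> N" unfolding T_def by auto
        have fE: "f \<in> edges G2" "d f \<in> {a,b}" "f \<notin> L" using f unfolding N_def by auto
        show "h \<in> T"
        proof (cases w)
          case (Inl u)
          then show ?thesis using w f ends_Inr_Inl by blast
        next
          case (Inr u)
          then have uf: "u \<in> ends G2 f" using w f ends_Inr_Inr by blast
          show ?thesis
          proof (cases h)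
            case (Inr f')
            then have uf': "u \<in> ends G2 f'" using w Inr \<open>w = Inr u\<close> ends_Inr_Inr by blast
            have f'E: "f' \<in> edges G2" "f' \<notin> y ` {1,2,3}" "d f' \<in> {a,b}" using hE colh \<open>h = Inr f'\<close> pin by auto
            have "f' \<notin> L" using Ladj[OF _ fE(1,2) uf' uf] fE(3) by blast
            then show ?thesis using f'E \<open>h = Inr f'\<close> unfolding T_def N_def by blast
          next
            case (Inl f')
            then obtain j where j: "j \<in> {1,2,3}" "f' = x j" "u \<in> ends G2 (y j)"
              using w \<open>w = Inr u\<close> ends_Inl_Inr by blast
            have "c (x j) \<in> {a',b'}" using colh Inl j x_facts[of j] by auto
            then have "d (y j) \<in> {a,b}" using pc j pin by metis
            then have "y j \<in> L" using yL j by blast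
            then have "f \<in> L" using Ladj[OF _ fE(1,2) j(3) uf] by blast
            then show ?thesis using fE by blast
          qed
        qed
      qed
      show "colY G1 v1 x G2 v2 y c d' (swap_col a' b' \<circ> p) = (\<lambda>f. if f \<in> T then swap_col a' b' (?col f) else ?col f)"
      proof
        fix g show "colY G1 v1 x G2 v2 y c d' (swap_col a' b' \<circ> p) g = (if g \<in> T then swap_col a' b' (?col g) else ?col g)"
        proof (cases g)
          case (Inl f) then show ?thesis unfolding T_def by auto
        next
          case (Inr f)
          show ?thesis
          proof (cases "f \<in> edges G2 \<and> f \<notin> y ` {1,2,3}")
            case False then show ?thesis using Inr unfolding T_def N_def by auto
          next
            case True
            show ?thesis
            proof (cases "f \<in> L")
              case True then show ?thesis using Inr \<open>f \<in> edges G2 \<and> f \<notin> y ` {1,2,3}\<close>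
                unfolding T_def N_def by (auto simp: d'L psw)
            next
              case False
              show ?thesis
              proof (cases "d f \<in> {a,b}")
                case True then show ?thesis using Inr False \<open>f \<in> edges G2 \<and> f \<notin> y ` {1,2,3}\<close>
                  unfolding T_def N_def by (simp add: d'L)
              next
                case nab: False
                then have "p (d f) \<notin> {a',b'}" using pin by blast
                then show ?thesis using Inr False nab \<open>f \<in> edges G2 \<and> f \<notin> y ` {1,2,3}\<close>
                  unfolding T_def N_def by (simp add: d'L swap_col_fix)
              qed
            qed
          qed
        qed
      qed
    qed
    ultimately show ?thesis by blast
  qed
qed

end


context Ysetup begin

lemma Y_cequiv:
  assumes "kempe_equiv G1 c c'"
  shows "Y_perm x y c d p \<Longrightarrow> \<exists>p'. Y_perm x y c' d p' \<and>
    kempe_equiv GY (colY G1 v1 x G2 v2 y c d p) (colY G1 v1 x G2 v2 y c' d p')"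
  using assms unfolding kempe_equiv_def
proof (induction rule: rtranclp_induct)
  case base then show ?case by blast
next
  case (step c1 c2)
  then obtain p1 where p1: "Y_perm x y c1 d p1"
    "(kempe_step GY)\<^sup>*\<^sup>* (colY G1 v1 x G2 v2 y c d p) (colY G1 v1 x G2 v2 y c1 d p1)" by blast
  obtain p2 where p2: "Y_perm x y c2 d p2"
    "kempe_equiv GY (colY G1 v1 x G2 v2 y c1 d p1) (colY G1 v1 x G2 v2 y c2 d p2)"
    using Y_cstep[OF p1(1) step(2)] by blast
  show ?case using rtranclp_trans[OF p1(2) p2(2)[unfolded kempe_equiv_def]] p2(1)
    unfolding kempe_equiv_def by blast
qed

lemma Y_dequiv:
  assumes "kempe_equiv G2 d d'"
  shows "Y_perm x y c d p \<Longrightarrow> \<exists>p'. Y_perm x y c d' p' \<and>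
    kempe_equiv GY (colY G1 v1 x G2 v2 y c d p) (colY G1 v1 x G2 v2 y c d' p')"
  using assms unfolding kempe_equiv_def
proof (induction rule: rtranclp_induct)
  case base then show ?case by blast
next
  case (step d1 d2)
  then obtain p1 where p1: "Y_perm x y c d1 p1"
    "(kempe_step GY)\<^sup>*\<^sup>* (colY G1 v1 x G2 v2 y c d p) (colY G1 v1 x G2 v2 y c d1 p1)" by blast
  obtain p2 where p2: "Y_perm x y c d2 p2"
    "kempe_equiv GY (colY G1 v1 x G2 v2 y c d1 p1) (colY G1 v1 x G2 v2 y c d2 p2)"
    using Y_dstep[OF p1(1) step(2)] by blast
  show ?case using rtranclp_trans[OF p1(2) p2(2)[unfolded kempe_equiv_def]] p2(1)
    unfolding kempe_equiv_def by blast
qed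

lemma Y_perm_unique:
  assumes pd: "proper_3col G2 d" and P: "Y_perm x y c d p" and Q: "Y_perm x y c d q"
  shows "p = q"
proof -
  have pp: "p permutes {1,2,3}" and qp: "q permutes {1,2,3}"
    using P Q unfolding Y_perm_def by auto
  have inj: "inj_on (d \<circ> y) {1,2,3}"
  proof (rule inj_onI)
    fix i j :: nat assume ij: "i \<in> {1,2,3}" "j \<in> {1,2,3}" "(d \<circ> y) i = (d \<circ> y) j"
    show "i = j"
    proof (rule ccontr)
      assume "i \<noteq> j"
      moreover have "inj_on y {1,2,3}" using Yd2 unfolding Y_data_def by simp
      ultimately have yne: "y i \<noteq> y j" using inj_onD[OF _ _ ij(1) ij(2)] by metis
      have pr: "\<And>e f. e \<in> edges G2 \<Longrightarrow> f \<in> edges G2 \<Longrightarrow> e \<noteq> f \<Longrightarrow> ends G2 e \<inter> ends G2 f \<noteq> {} \<Longrightarrow> d e \<noteq> d f"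
        using pd unfolding proper_3col_def by blast
      have yi: "y i \<in> edges G2" "v2 \<in> ends G2 (y i)" using y_facts[OF ij(1)] by auto
      have yj: "y j \<in> edges G2" "v2 \<in> ends G2 (y j)" using y_facts[OF ij(2)] by auto
      have "d (y i) \<noteq> d (y j)" by (rule pr[OF yi(1) yj(1) yne]) (use yi yj in auto)
      then show False using ij by simp
    qed
  qed
  have sub: "(d \<circ> y) ` {1,2,3} \<subseteq> {1,2,3}" using pd y_facts unfolding proper_3col_def by auto
  have "card ((d \<circ> y) ` {1,2,3}) = card {1::nat,2,3}" using card_image[OF inj] by simp
  then have V: "(d \<circ> y) ` {1,2,3} = {1,2,3}" using sub by (simp add: card_subset_eq)
  show ?thesis
  proof
    fix k show "p k = q k"
    proof (cases "k \<in> {1,2,3}")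
      case True
      then have "k \<in> (d \<circ> y) ` {1,2,3}" by (simp only: V)
      then obtain j where j: "j \<in> {1,2,3}" "k = d (y j)" by auto
      then show ?thesis using P Q unfolding Y_perm_def by auto
    next
      case False then show ?thesis using pp qp by (simp add: permutes_not_in)
    qed
  qed
qed

lemma Y_main:
  assumes "kempe_equiv G1 c1 c2" "kempe_equiv G2 d1 d2" "proper_3col G2 d2"
    "Y_perm x y c1 d1 p1" "Y_perm x y c2 d2 p2"
  shows "kempe_equiv GY (colY G1 v1 x G2 v2 y c1 d1 p1) (colY G1 v1 x G2 v2 y c2 d2 p2)"
proof -
  obtain q where q: "Y_perm x y c2 d1 q"
    "kempe_equiv GY (colY G1 v1 x G2 v2 y c1 d1 p1) (colY G1 v1 x G2 v2 y c2 d1 q)"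
    using Y_cequiv[OF assms(1) assms(4)] by blast
  obtain r where r: "Y_perm x y c2 d2 r"
    "kempe_equiv GY (colY G1 v1 x G2 v2 y c2 d1 q) (colY G1 v1 x G2 v2 y c2 d2 r)"
    using Y_dequiv[OF assms(2) q(1)] by blast
  have "r = p2" using Y_perm_unique[OF assms(3) r(1) assms(5)] .
  then show ?thesis using rtranclp_trans[OF q(2)[unfolded kempe_equiv_def] r(2)[unfolded kempe_equiv_def]]
    unfolding kempe_equiv_def by simp
qed

end


locale Hsetup =
  fixes G1 :: "('v1,'e1) mgraph" and x :: 'e1 and s11 s12 :: 'v1
    and G2 :: "('v2,'e2) mgraph" and y :: 'e2 and s21 s22 :: 'v2
  assumes fin1: "finite (edges G1)" and fin2: "finite (edges G2)"
    and Hd1: "H_data G1 x s11 s12" and Hd2: "H_data G2 y s21 s22"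
begin

abbreviation "GH \<equiv> graphH G1 x s11 s12 G2 y s21 s22"

lemma xE: "x \<in> edges G1" and yE: "y \<in> edges G2"
  using Hd1 Hd2 unfolding H_data_def by auto

lemma edgesH[simp]: "Inl e \<in> edges GH \<longleftrightarrow> e \<in> edges G1"
  "Inr f \<in> edges GH \<longleftrightarrow> f \<in> edges G2"
  by (auto simp: graphH_def)

lemma finH: "finite (edges GH)"
  using fin1 fin2 by (simp add: graphH_def)

lemma ends_Inl_Inl: "Inl u \<in> ends GH (Inl e) \<Longrightarrow> u \<in> ends G1 e"
  using Hd1 by (auto simp: graphH_def H_data_def split: if_splits)

lemma ends_Inl_Inr: "Inr u \<in> ends GH (Inl e) \<Longrightarrow> e = x \<and> u \<in> ends G2 y"
  using Hd2 by (auto simp: graphH_def H_data_def split: if_splits)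

lemma ends_Inr_Inl: "Inl u \<in> ends GH (Inr e) \<Longrightarrow> e = y \<and> u \<in> ends G1 x"
  using Hd1 by (auto simp: graphH_def H_data_def split: if_splits)

lemma ends_Inr_Inr: "Inr u \<in> ends GH (Inr e) \<Longrightarrow> u \<in> ends G2 e"
  using Hd2 by (auto simp: graphH_def H_data_def split: if_splits)

lemma colH_Inl[simp]: "colH G1 x s11 s12 G2 y s21 s22 c d p (Inl e) = (if e \<in> edges G1 then c e else 0)"
  by (simp add: colH_def)

lemma colH_Inr[simp]: "colH G1 x s11 s12 G2 y s21 s22 c d p (Inr e) = (if e \<in> edges G2 then p (d e) else 0)"
  by (simp add: colH_def)

end


context Hsetup begin

lemma H_cstep:
  assumes Hp: "H_perm x y c d p" and st: "kempe_step G1 c c'"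
  shows "\<exists>p'. H_perm x y c' d p' \<and>
    kempe_equiv GH (colH G1 x s11 s12 G2 y s21 s22 c d p) (colH G1 x s11 s12 G2 y s21 s22 c' d p')"
proof -
  from st obtain a b e where ab: "a \<in> {1,2,3}" "b \<in> {1,2,3}" "a \<noteq> b" and eE: "e \<in> edges G1"
    and ce: "c e \<in> {a,b}"
    and c'def: "c' = (\<lambda>f. if f \<in> kempe_chain G1 c a b e then swap_col a b (c f) else c f)"
    unfolding kempe_step_def by blast
  define K where "K = kempe_chain G1 c a b e"
  have KE: "f \<in> K \<Longrightarrow> f \<in> edges G1" for f unfolding K_def using chain_edges eE by metis
  have Kc: "f \<in> K \<Longrightarrow> c f \<in> {a,b}" for f unfolding K_def using chain_col ce by metis
  have Kadj: "f \<in> K \<Longrightarrow> f' \<in> edges G1 \<Longrightarrow> c f' \<in> {a,b} \<Longrightarrow> u \<in> ends G1 f \<Longrightarrow> u \<in> ends G1 f'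
     \<Longrightarrow> f' \<in> K" for f f' u
    unfolding K_def using chain_adj[of e G1 c a b, OF eE ce] by metis
  let ?col = "colH G1 x s11 s12 G2 y s21 s22 c d p"
  have pp: "p permutes {1,2,3}" and pc: "p (d y) = c x"
    using Hp unfolding H_perm_def by auto
  have c'K: "c' f = (if f \<in> K then swap_col a b (c f) else c f)" for f
    unfolding c'def K_def ..
  show ?thesis
  proof (cases "x \<in> K")
    case False
    define T :: "('e1 + 'e2) set" where "T = Inl ` K"
    have "H_perm x y c' d p"
      using Hp False unfolding H_perm_def c'K by auto
    moreover have "kempe_equiv GH ?col (colH G1 x s11 s12 G2 y s21 s22 c' d p)"
    proof (rule swap_closed'[OF finH _ ab, where T = T])
      show "T \<subseteq> edges GH" unfolding T_def using KE by auto
      show "\<forall>f\<in>T. ?col f \<in> {a, b}" unfolding T_def using KE Kc by fastforce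
      show "\<forall>g h. g \<in> T \<longrightarrow> ab_adj GH ?col a b g h \<longrightarrow> h \<in> T"
      proof (intro allI impI)
        fix g h assume g: "g \<in> T" and adj: "ab_adj GH ?col a b g h"
        from adj obtain w where hE: "h \<in> edges GH" and colh: "?col h \<in> {a,b}"
          and w: "w \<in> ends GH g" "w \<in> ends GH h" unfolding ab_adj_def by auto
        from g obtain f where f: "g = Inl f" "f \<in> K" unfolding T_def by auto
        have fnx: "f \<noteq> x" using False f by auto
        show "h \<in> T"
        proof (cases w)
          case (Inr u)
          then show ?thesis using w f fnx ends_Inl_Inr by blast
        next
          case (Inl u)
          then have uf: "u \<in> ends G1 f" using w f ends_Inl_Inl by blast
          show ?thesis
          proof (cases h)
            case (Inl f')
            then have "u \<in> ends G1 f'" using w \<open>w = Inl u\<close> ends_Inl_Inl by blast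
            moreover have "f' \<in> edges G1" "c f' \<in> {a,b}" using hE colh \<open>h = Inl f'\<close> by auto
            ultimately show ?thesis using Kadj f uf \<open>h = Inl f'\<close> unfolding T_def by blast
          next
            case (Inr f')
            then have "f' = y" "u \<in> ends G1 x" using w \<open>w = Inl u\<close> ends_Inr_Inl by blast+
            then have "c x \<in> {a,b}" using colh Inr pc yE by auto
            then have "x \<in> K" using Kadj[OF f(2) xE _ uf \<open>u \<in> ends G1 x\<close>] by blast
            then show ?thesis using False by blast
          qed
        qed
      qed
      show "colH G1 x s11 s12 G2 y s21 s22 c' d p = (\<lambda>f. if f \<in> T then swap_col a b (?col f) else ?col f)"
      proof
        fix g show "colH G1 x s11 s12 G2 y s21 s22 c' d p g = (if g \<in> T then swap_col a b (?col g) else ?col g)"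
          unfolding T_def using KE by (cases g) (auto simp: c'K)
      qed
    qed
    ultimately show ?thesis by blast
  next
    case True
    define N where "N = {f. f \<in> edges G2 \<and> p (d f) \<in> {a,b}}"
    define T where "T = Inl ` K \<union> Inr ` N"
    have "H_perm x y c' d (swap_col a b \<circ> p)"
      unfolding H_perm_def
    proof
      show "swap_col a b \<circ> p permutes {1,2,3}"
        using pp swap_col_permutes[OF ab(1,2)] by (simp add: permutes_compose)
      show "(swap_col a b \<circ> p) (d y) = c' x" using True pc by (simp add: c'K)
    qed
    moreover have "kempe_equiv GH ?col (colH G1 x s11 s12 G2 y s21 s22 c' d (swap_col a b \<circ> p))"
    proof (rule swap_closed'[OF finH _ ab, where T = T])
      show "T \<subseteq> edges GH" unfolding T_def N_def using KE by auto
      show "\<forall>f\<in>T. ?col f \<in> {a, b}" unfolding T_def N_def using KE Kc by fastforce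
      show "\<forall>g h. g \<in> T \<longrightarrow> ab_adj GH ?col a b g h \<longrightarrow> h \<in> T"
      proof (intro allI impI)
        fix g h assume g: "g \<in> T" and adj: "ab_adj GH ?col a b g h"
        from adj obtain w where hE: "h \<in> edges GH" and colh: "?col h \<in> {a,b}"
          and w: "w \<in> ends GH g" "w \<in> ends GH h" unfolding ab_adj_def by auto
        show "h \<in> T"
        proof (cases h)
          case (Inr f')
          then show ?thesis using hE colh unfolding T_def N_def by auto
        next
          case (Inl f')
          have f'E: "f' \<in> edges G1" "c f' \<in> {a,b}" using hE colh Inl by auto
          show ?thesis
          proof (cases w)
            case (Inr u)
            then have "f' = x" using w Inl ends_Inl_Inr by blast
            then show ?thesis using True Inl unfolding T_def by blast
          next
            case (Inl u)
            then have uf': "u \<in> ends G1 f'" using w \<open>h = Inl f'\<close> ends_Inl_Inl by blast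
            show ?thesis
            proof (cases g)
              case (Inl f)
              then have fK: "f \<in> K" using g unfolding T_def by auto
              have "u \<in> ends G1 f" using w \<open>g = Inl f\<close> \<open>w = Inl u\<close> ends_Inl_Inl by blast
              then show ?thesis using Kadj[OF fK f'E _ uf'] \<open>h = Inl f'\<close> unfolding T_def by blast
            next
              case (Inr f)
              then have "u \<in> ends G1 x" using w \<open>w = Inl u\<close> ends_Inr_Inl by blast
              then show ?thesis using Kadj[OF True f'E _ uf'] \<open>h = Inl f'\<close> unfolding T_def by blast
            qed
          qed
        qed
      qed
      show "colH G1 x s11 s12 G2 y s21 s22 c' d (swap_col a b \<circ> p) = (\<lambda>f. if f \<in> T then swap_col a b (?col f) else ?col f)"
      proof
        fix g show "colH G1 x s11 s12 G2 y s21 s22 c' d (swap_col a b \<circ> p) g = (if g \<in> T then swap_col a b (?col g) else ?col g)"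
          unfolding T_def N_def using KE by (cases g) (auto simp: swap_col_def c'K)
      qed
    qed
    ultimately show ?thesis by blast
  qed
qed

end


context Hsetup begin

lemma H_dstep:
  assumes Hp: "H_perm x y c d p" and st: "kempe_step G2 d d'"
  shows "\<exists>p'. H_perm x y c d' p' \<and>
    kempe_equiv GH (colH G1 x s11 s12 G2 y s21 s22 c d p) (colH G1 x s11 s12 G2 y s21 s22 c d' p')"
proof -
  from st obtain a b e where ab: "a \<in> {1,2,3}" "b \<in> {1,2,3}" "a \<noteq> b" and eE: "e \<in> edges G2"
    and de: "d e \<in> {a,b}"
    and d'def: "d' = (\<lambda>f. if f \<in> kempe_chain G2 d a b e then swap_col a b (d f) else d f)"
    unfolding kempe_step_def by blast
  define L where "L = kempe_chain G2 d a b e"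
  have LE: "f \<in> L \<Longrightarrow> f \<in> edges G2" for f unfolding L_def using chain_edges eE by metis
  have Lc: "f \<in> L \<Longrightarrow> d f \<in> {a,b}" for f unfolding L_def using chain_col de by metis
  have Ladj: "f \<in> L \<Longrightarrow> f' \<in> edges G2 \<Longrightarrow> d f' \<in> {a,b} \<Longrightarrow> u \<in> ends G2 f \<Longrightarrow> u \<in> ends G2 f'
     \<Longrightarrow> f' \<in> L" for f f' u
    unfolding L_def using chain_adj[of e G2 d a b, OF eE de] by metis
  let ?col = "colH G1 x s11 s12 G2 y s21 s22 c d p"
  have pp: "p permutes {1,2,3}" and pc: "p (d y) = c x"
    using Hp unfolding H_perm_def by auto
  have injp: "inj p" using pp permutes_inj by blast
  define a' where "a' = p a"
  define b' where "b' = p b"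
  have ab': "a' \<in> {1,2,3}" "b' \<in> {1,2,3}" "a' \<noteq> b'"
  proof -
    show "a' \<in> {1,2,3}" using ab(1) pp unfolding a'_def by (simp only: permutes_in_image)
    show "b' \<in> {1,2,3}" using ab(2) pp unfolding b'_def by (simp only: permutes_in_image)
    show "a' \<noteq> b'" using ab(3) unfolding a'_def b'_def by (simp add: inj_eq[OF injp])
  qed
  have pin: "p k \<in> {a',b'} \<longleftrightarrow> k \<in> {a,b}" for k
    unfolding a'_def b'_def by (simp add: inj_eq[OF injp])
  have psw: "p (swap_col a b k) = swap_col a' b' (p k)" for k
    unfolding a'_def b'_def using swap_col_perm[OF injp] .
  have d'L: "d' f = (if f \<in> L then swap_col a b (d f) else d f)" for f
    unfolding d'def L_def ..
  show ?thesis
  proof (cases "y \<in> L")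
    case False
    define T :: "('e1 + 'e2) set" where "T = Inr ` L"
    have "H_perm x y c d' p"
      using Hp False unfolding H_perm_def d'L by auto
    moreover have "kempe_equiv GH ?col (colH G1 x s11 s12 G2 y s21 s22 c d' p)"
    proof (rule swap_closed'[OF finH _ ab', where T = T])
      show "T \<subseteq> edges GH" unfolding T_def using LE by auto
      show "\<forall>f\<in>T. ?col f \<in> {a', b'}" unfolding T_def using LE Lc pin by auto
      show "\<forall>g h. g \<in> T \<longrightarrow> ab_adj GH ?col a' b' g h \<longrightarrow> h \<in> T"
      proof (intro allI impI)
        fix g h assume g: "g \<in> T" and adj: "ab_adj GH ?col a' b' g h"
        from adj obtain w where hE: "h \<in> edges GH" and colh: "?col h \<in> {a',b'}"
          and w: "w \<in> ends GH g" "w \<in> ends GH h" unfolding ab_adj_def by auto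
        from g obtain f where f: "g = Inr f" "f \<in> L" unfolding T_def by auto
        have fny: "f \<noteq> y" using False f by auto
        show "h \<in> T"
        proof (cases w)
          case (Inl u)
          then show ?thesis using w f fny ends_Inr_Inl by blast
        next
          case (Inr u)
          then have uf: "u \<in> ends G2 f" using w f ends_Inr_Inr by blast
          show ?thesis
          proof (cases h)
            case (Inr f')
            then have "u \<in> ends G2 f'" using w \<open>w = Inr u\<close> ends_Inr_Inr by blast
            moreover have "f' \<in> edges G2" "d f' \<in> {a,b}" using hE colh \<open>h = Inr f'\<close> pin by auto
            ultimately show ?thesis using Ladj f uf \<open>h = Inr f'\<close> unfolding T_def by blast
          next
            case (Inl f')
            then have "f' = x" "u \<in> ends G2 y" using w \<open>w = Inr u\<close> ends_Inl_Inr by blast+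
            then have "c x \<in> {a',b'}" using colh Inl xE by auto
            then have "d y \<in> {a,b}" using pc pin by metis
            then have "y \<in> L" using Ladj[OF f(2) yE _ uf \<open>u \<in> ends G2 y\<close>] by blast
            then show ?thesis using False by blast
          qed
        qed
      qed
      show "colH G1 x s11 s12 G2 y s21 s22 c d' p = (\<lambda>f. if f \<in> T then swap_col a' b' (?col f) else ?col f)"
      proof
        fix g show "colH G1 x s11 s12 G2 y s21 s22 c d' p g = (if g \<in> T then swap_col a' b' (?col g) else ?col g)"
          unfolding T_def using LE by (cases g) (auto simp: d'L psw)
      qed
    qed
    ultimately show ?thesis by blast
  next
    case True
    define N where "N = {f. f \<in> edges G2 \<and> d f \<in> {a,b} \<and> f \<notin> L}"
    define T :: "('e1 + 'e2) set" where "T = Inr ` N"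
    have "H_perm x y c d' (swap_col a' b' \<circ> p)"
      unfolding H_perm_def
    proof
      show "swap_col a' b' \<circ> p permutes {1,2,3}"
        using pp swap_col_permutes[OF ab'(1,2)] by (simp add: permutes_compose)
      show "(swap_col a' b' \<circ> p) (d' y) = c x" using True pc by (simp add: d'L psw)
    qed
    moreover have "kempe_equiv GH ?col (colH G1 x s11 s12 G2 y s21 s22 c d' (swap_col a' b' \<circ> p))"
    proof (rule swap_closed'[OF finH _ ab', where T = T])
      show "T \<subseteq> edges GH" unfolding T_def N_def by auto
      show "\<forall>f\<in>T. ?col f \<in> {a', b'}" unfolding T_def N_def using pin by auto
      show "\<forall>g h. g \<in> T \<longrightarrow> ab_adj GH ?col a' b' g h \<longrightarrow> h \<in> T"
      proof (intro allI impI)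
        fix g h assume g: "g \<in> T" and adj: "ab_adj GH ?col a' b' g h"
        from adj obtain w where hE: "h \<in> edges GH" and colh: "?col h \<in> {a',b'}"
          and w: "w \<in> ends GH g" "w \<in> ends GH h" unfolding ab_adj_def by auto
        from g obtain f where f: "g = Inr f" "f \<in> N" unfolding T_def by auto
        have fE: "f \<in> edges G2" "d f \<in> {a,b}" "f \<notin> L" using f unfolding N_def by auto
        have fny: "f \<noteq> y" using True fE by auto
        show "h \<in> T"
        proof (cases w)
          case (Inl u)
          then show ?thesis using w f fny ends_Inr_Inl by blast
        next
          case (Inr u)
          then have uf: "u \<in> ends G2 f" using w f ends_Inr_Inr by blast
          show ?thesis
          proof (cases h)
            case (Inr f')
            then have uf': "u \<in> ends G2 f'" using w \<open>w = Inr u\<close> ends_Inr_Inr by blast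
            have f'E: "f' \<in> edges G2" "d f' \<in> {a,b}" using hE colh \<open>h = Inr f'\<close> pin by auto
            have "f' \<notin> L" using Ladj[OF _ fE(1,2) uf' uf] fE(3) by blast
            then show ?thesis using f'E \<open>h = Inr f'\<close> unfolding T_def N_def by blast
          next
            case (Inl f')
            then have "u \<in> ends G2 y" using w \<open>w = Inr u\<close> ends_Inl_Inr by blast
            then have "f \<in> L" using Ladj[OF True fE(1,2) _ uf] by blast
            then show ?thesis using fE by blast
          qed
        qed
      qed
      show "colH G1 x s11 s12 G2 y s21 s22 c d' (swap_col a' b' \<circ> p) = (\<lambda>f. if f \<in> T then swap_col a' b' (?col f) else ?col f)"
      proof
        fix g show "colH G1 x s11 s12 G2 y s21 s22 c d' (swap_col a' b' \<circ> p) g = (if g \<in> T then swap_col a' b' (?col g) else ?col g)"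
        proof (cases g)
          case (Inl f) then show ?thesis unfolding T_def by auto
        next
          case (Inr f)
          show ?thesis
          proof (cases "f \<in> edges G2")
            case False then show ?thesis using Inr unfolding T_def N_def by auto
          next
            case fE: True
            show ?thesis
            proof (cases "f \<in> L")
              case True then show ?thesis using Inr fE
                unfolding T_def N_def by (auto simp: d'L psw)
            next
              case False
              show ?thesis
              proof (cases "d f \<in> {a,b}")
                case True then show ?thesis using Inr False fE
                  unfolding T_def N_def by (simp add: d'L)
              next
                case nab: False
                then have "p (d f) \<notin> {a',b'}" using pin by blast
                then show ?thesis using Inr False nab fE
                  unfolding T_def N_def by (simp add: d'L swap_col_fix)
              qed
            qed
          qed
        qed
      qed
    qed
    ultimately show ?thesis by blast
  qed
qed

end


lemma perm3:
  assumes pp: "p permutes {1,2,3::nat}" and qp: "q permutes {1,2,3}" and z: "z \<in> {1,2,3}"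
    and pq: "p z = q z"
  shows "q = p \<or> (\<exists>a b. a \<in> {1,2,3} \<and> b \<in> {1,2,3} \<and> a \<noteq> b \<and> p z \<notin> {a,b} \<and> q = swap_col a b \<circ> p)"
proof -
  define t where "t = q \<circ> inv p"
  have tp: "t permutes {1,2,3}" unfolding t_def using qp permutes_inv[OF pp] by (rule permutes_compose[rotated])
  have qt: "q = t \<circ> p" unfolding t_def using permutes_inv_o(2)[OF pp] by (simp add: comp_assoc)
  define w where "w = p z"
  have w: "w \<in> {1,2,3}" unfolding w_def using z pp by (simp only: permutes_in_image)
  have tw: "t w = w" unfolding t_def w_def using permutes_inverses(2)[OF pp, of z] pq by (metis comp_apply)
  obtain a b where abw: "{1,2,3::nat} - {w} = {a,b}" "a \<noteq> b"
  proof -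
    from w consider "w = 1" | "w = 2" | "w = 3" by blast
    then show ?thesis
    proof cases
      case 1 show ?thesis by (rule that[of 2 3]) (auto simp: 1)
    next
      case 2 show ?thesis by (rule that[of 1 3]) (auto simp: 2)
    next
      case 3 show ?thesis by (rule that[of 1 2]) (auto simp: 3)
    qed
  qed
  have "a \<in> {1,2,3} - {w}" "b \<in> {1,2,3} - {w}" unfolding abw(1) by simp_all
  then have a: "a \<in> {1,2,3}" "a \<noteq> w" and b: "b \<in> {1,2,3}" "b \<noteq> w" by simp_all
  have injt: "inj t" using tp permutes_inj by blast
  have ta: "t a \<in> {a,b}"
  proof -
    have "t a \<in> {1,2,3}" using a tp by (simp only: permutes_in_image)
    moreover have "t a \<noteq> w" using a(2) tw inj_eq[OF injt, of a w] by simp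
    ultimately have "t a \<in> {1,2,3} - {w}" by simp
    then show ?thesis unfolding abw(1) .
  qed
  have tb: "t b \<in> {a,b}"
  proof -
    have "t b \<in> {1,2,3}" using b tp by (simp only: permutes_in_image)
    moreover have "t b \<noteq> w" using b(2) tw inj_eq[OF injt, of b w] by simp
    ultimately have "t b \<in> {1,2,3} - {w}" by simp
    then show ?thesis unfolding abw(1) .
  qed
  have tab: "t a \<noteq> t b" using abw(2) inj_eq[OF injt] by simp
  have all: "n = w \<or> n = a \<or> n = b \<or> n \<notin> {1,2,3}" for n
  proof (cases "n \<in> {1,2,3} - {w}")
    case True then have "n \<in> {a,b}" unfolding abw(1) .
    then show ?thesis by blast
  next
    case False then show ?thesis by auto
  qed
  have tout: "n \<notin> {1,2,3} \<Longrightarrow> t n = n" for n using tp by (simp add: permutes_not_in)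
  show ?thesis
  proof (cases "t a = a")
    case True
    then have "t b = b" using tb tab by auto
    then have "t = id"
    proof -
      assume tb': "t b = b"
      show "t = id"
      proof
        fix n show "t n = id n" using all[of n] True tb' tw tout by auto
      qed
    qed
    then show ?thesis using qt by simp
  next
    case False
    then have ta': "t a = b" using ta by auto
    then have tb': "t b = a" using tb tab by auto
    have "t = swap_col a b"
    proof
      fix n show "t n = swap_col a b n"
        using all[of n] ta' tb' tw tout a b abw(2) by (auto simp: swap_col_def)
    qed
    then have qs: "q = swap_col a b \<circ> p" using qt by simp
    have pz: "p z \<notin> {a,b}" using a(2) b(2) unfolding w_def by auto
    show ?thesis
      by (rule disjI2, rule exI[of _ a], rule exI[of _ b]) (use a(1) b(1) abw(2) pz qs in simp)
  qed
qed

context Hsetup begin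

lemma H_cequiv:
  assumes "kempe_equiv G1 c c'"
  shows "H_perm x y c d p \<Longrightarrow> \<exists>p'. H_perm x y c' d p' \<and>
    kempe_equiv GH (colH G1 x s11 s12 G2 y s21 s22 c d p) (colH G1 x s11 s12 G2 y s21 s22 c' d p')"
  using assms unfolding kempe_equiv_def
proof (induction rule: rtranclp_induct)
  case base then show ?case by blast
next
  case (step c1 c2)
  then obtain p1 where p1: "H_perm x y c1 d p1"
    "(kempe_step GH)\<^sup>*\<^sup>* (colH G1 x s11 s12 G2 y s21 s22 c d p) (colH G1 x s11 s12 G2 y s21 s22 c1 d p1)" by blast
  obtain p2 where p2: "H_perm x y c2 d p2"
    "kempe_equiv GH (colH G1 x s11 s12 G2 y s21 s22 c1 d p1) (colH G1 x s11 s12 G2 y s21 s22 c2 d p2)"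
    using H_cstep[OF p1(1) step(2)] by blast
  show ?case using rtranclp_trans[OF p1(2) p2(2)[unfolded kempe_equiv_def]] p2(1)
    unfolding kempe_equiv_def by blast
qed

lemma H_dequiv:
  assumes "kempe_equiv G2 d d'"
  shows "H_perm x y c d p \<Longrightarrow> \<exists>p'. H_perm x y c d' p' \<and>
    kempe_equiv GH (colH G1 x s11 s12 G2 y s21 s22 c d p) (colH G1 x s11 s12 G2 y s21 s22 c d' p')"
  using assms unfolding kempe_equiv_def
proof (induction rule: rtranclp_induct)
  case base then show ?case by blast
next
  case (step d1 d2)
  then obtain p1 where p1: "H_perm x y c d1 p1"
    "(kempe_step GH)\<^sup>*\<^sup>* (colH G1 x s11 s12 G2 y s21 s22 c d p) (colH G1 x s11 s12 G2 y s21 s22 c d1 p1)" by blast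
  obtain p2 where p2: "H_perm x y c d2 p2"
    "kempe_equiv GH (colH G1 x s11 s12 G2 y s21 s22 c d1 p1) (colH G1 x s11 s12 G2 y s21 s22 c d2 p2)"
    using H_dstep[OF p1(1) step(2)] by blast
  show ?case using rtranclp_trans[OF p1(2) p2(2)[unfolded kempe_equiv_def]] p2(1)
    unfolding kempe_equiv_def by blast
qed

lemma H_swap_perm:
  assumes Hp: "H_perm x y c d p" and ab: "a \<in> {1,2,3}" "b \<in> {1,2,3}" "a \<noteq> b"
    and nab: "p (d y) \<notin> {a,b}"
  shows "kempe_equiv GH (colH G1 x s11 s12 G2 y s21 s22 c d p) (colH G1 x s11 s12 G2 y s21 s22 c d (swap_col a b \<circ> p))"
proof -
  let ?col = "colH G1 x s11 s12 G2 y s21 s22 c d p"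
  have pc: "p (d y) = c x" using Hp unfolding H_perm_def by auto
  define N where "N = {f. f \<in> edges G2 \<and> p (d f) \<in> {a,b}}"
  define T :: "('e1 + 'e2) set" where "T = Inr ` N"
  show ?thesis
  proof (rule swap_closed'[OF finH _ ab, where T = T])
    show "T \<subseteq> edges GH" unfolding T_def N_def by auto
    show "\<forall>f\<in>T. ?col f \<in> {a, b}" unfolding T_def N_def by auto
    show "\<forall>g h. g \<in> T \<longrightarrow> ab_adj GH ?col a b g h \<longrightarrow> h \<in> T"
    proof (intro allI impI)
      fix g h assume g: "g \<in> T" and adj: "ab_adj GH ?col a b g h"
      from adj obtain w where hE: "h \<in> edges GH" and colh: "?col h \<in> {a,b}"
        and w: "w \<in> ends GH g" "w \<in> ends GH h" unfolding ab_adj_def by auto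
      from g obtain f where f: "g = Inr f" "f \<in> N" unfolding T_def by auto
      have fny: "f \<noteq> y" using f nab unfolding N_def by auto
      show "h \<in> T"
      proof (cases h)
        case (Inr f')
        then show ?thesis using hE colh unfolding T_def N_def by auto
      next
        case (Inl f')
        show ?thesis
        proof (cases w)
          case (Inl u)
          then show ?thesis using w f fny ends_Inr_Inl by blast
        next
          case (Inr u)
          then have "f' = x" using w \<open>h = Inl f'\<close> ends_Inl_Inr by blast
          then have "c x \<in> {a,b}" using colh Inl xE by auto
          then show ?thesis using nab pc by simp
        qed
      qed
    qed
    show "colH G1 x s11 s12 G2 y s21 s22 c d (swap_col a b \<circ> p) = (\<lambda>f. if f \<in> T then swap_col a b (?col f) else ?col f)"
    proof
      fix g show "colH G1 x s11 s12 G2 y s21 s22 c d (swap_col a b \<circ> p) g = (if g \<in> T then swap_col a b (?col g) else ?col g)"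
        unfolding T_def N_def by (cases g) (auto simp: swap_col_def)
    qed
  qed
qed

lemma H_main:
  assumes "kempe_equiv G1 c1 c2" "kempe_equiv G2 d1 d2" "proper_3col G2 d2"
    "H_perm x y c1 d1 p1" "H_perm x y c2 d2 p2"
  shows "kempe_equiv GH (colH G1 x s11 s12 G2 y s21 s22 c1 d1 p1) (colH G1 x s11 s12 G2 y s21 s22 c2 d2 p2)"
proof -
  obtain q where q: "H_perm x y c2 d1 q"
    "kempe_equiv GH (colH G1 x s11 s12 G2 y s21 s22 c1 d1 p1) (colH G1 x s11 s12 G2 y s21 s22 c2 d1 q)"
    using H_cequiv[OF assms(1) assms(4)] by blast
  obtain r where r: "H_perm x y c2 d2 r"
    "kempe_equiv GH (colH G1 x s11 s12 G2 y s21 s22 c2 d1 q) (colH G1 x s11 s12 G2 y s21 s22 c2 d2 r)"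
    using H_dequiv[OF assms(2) q(1)] by blast
  have rp: "r permutes {1,2,3}" "p2 permutes {1,2,3}" "r (d2 y) = p2 (d2 y)"
    using r(1) assms(5) unfolding H_perm_def by auto
  have dy: "d2 y \<in> {1,2,3}" using assms(3) yE unfolding proper_3col_def by blast
  have last: "kempe_equiv GH (colH G1 x s11 s12 G2 y s21 s22 c2 d2 r) (colH G1 x s11 s12 G2 y s21 s22 c2 d2 p2)"
  proof -
    from perm3[OF rp(1,2) dy rp(3)] consider "p2 = r"
      | a b where "a \<in> {1,2,3}" "b \<in> {1,2,3}" "a \<noteq> b" "r (d2 y) \<notin> {a,b}" "p2 = swap_col a b \<circ> r"
      by blast
    then show ?thesis
    proof cases
      case 1 then show ?thesis by (simp add: kempe_equiv_def)
    next
      case 2 then show ?thesis using H_swap_perm[OF r(1) 2(1-4)] by simp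
    qed
  qed
  show ?thesis using rtranclp_trans[OF rtranclp_trans[OF q(2)[unfolded kempe_equiv_def] r(2)[unfolded kempe_equiv_def]]
      last[unfolded kempe_equiv_def]]
    unfolding kempe_equiv_def .
qed

end


theorem lemma10:
  fixes G1 :: "('v1, 'e1) mgraph" and G2 :: "('v2, 'e2) mgraph"
    and c1 c2 :: "'e1 \<Rightarrow> nat" and d1 d2 :: "'e2 \<Rightarrow> nat"
  assumes "cubic G1" and "cubic G2"
    and "proper_3col G1 c1" and "proper_3col G1 c2" and "kempe_equiv G1 c1 c2"
    and "proper_3col G2 d1" and "proper_3col G2 d2" and "kempe_equiv G2 d1 d2"
  shows "(\<forall>v1 x v2 y p1 p2. Y_data G1 v1 x \<and> Y_data G2 v2 y \<and>
            Y_perm x y c1 d1 p1 \<and> Y_perm x y c2 d2 p2 \<longrightarrow>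
            kempe_equiv (graphY G1 v1 x G2 v2 y)
              (colY G1 v1 x G2 v2 y c1 d1 p1) (colY G1 v1 x G2 v2 y c2 d2 p2))
       \<and> (\<forall>x s11 s12 y s21 s22 p1 p2. H_data G1 x s11 s12 \<and> H_data G2 y s21 s22 \<and>
            H_perm x y c1 d1 p1 \<and> H_perm x y c2 d2 p2 \<longrightarrow>
            kempe_equiv (graphH G1 x s11 s12 G2 y s21 s22)
              (colH G1 x s11 s12 G2 y s21 s22 c1 d1 p1) (colH G1 x s11 s12 G2 y s21 s22 c2 d2 p2))"
proof -
  have wf1: "wf_graph G1" using assms(1) unfolding cubic_def by auto
  have wf2: "wf_graph G2" using assms(2) unfolding cubic_def by auto
  have fin1: "finite (edges G1)" using wf1 unfolding wf_graph_def by auto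
  have fin2: "finite (edges G2)" using wf2 unfolding wf_graph_def by auto
  show ?thesis
  proof (intro conjI allI impI)
    fix v1 x v2 y p1 p2
    assume A: "Y_data G1 v1 x \<and> Y_data G2 v2 y \<and> Y_perm x y c1 d1 p1 \<and> Y_perm x y c2 d2 p2"
    interpret Ysetup G1 v1 x G2 v2 y using wf1 wf2 A by unfold_locales auto
    show "kempe_equiv (graphY G1 v1 x G2 v2 y)
              (colY G1 v1 x G2 v2 y c1 d1 p1) (colY G1 v1 x G2 v2 y c2 d2 p2)"
      using Y_main[OF assms(5) assms(8) assms(7)] A by blast
  next
    fix x s11 s12 y s21 s22 p1 p2
    assume A: "H_data G1 x s11 s12 \<and> H_data G2 y s21 s22 \<and> H_perm x y c1 d1 p1 \<and> H_perm x y c2 d2 p2"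
    interpret Hsetup G1 x s11 s12 G2 y s21 s22 using fin1 fin2 A by unfold_locales auto
    show "kempe_equiv (graphH G1 x s11 s12 G2 y s21 s22)
              (colH G1 x s11 s12 G2 y s21 s22 c1 d1 p1) (colH G1 x s11 s12 G2 y s21 s22 c2 d2 p2)"
      using H_main[OF assms(5) assms(8) assms(7)] A by blast
  qed
qed


end
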